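(* Let $G$ be a tree on $k$ vertices, $n\ge 1$, $e=(s,t)$ an edge of $G$, and $C$ an $e$-cycle of $\Gamma^G_n$ of length $2^i$ (with $2\le i\le n$), whose vertices are the words $xw$ with $x\in\{s,t\}^i$ and $w$ a fixed word of length $n-i$. Let $\{u,v\}$ be an edge of $C$ other than the two special edges $e_C=\{s^iw,t^iw\}$ and $e_C'=\{s^{i-1}tw,\,t^{i-1}sw\}$. Then $$n(u,v)\,n(v,u)=k^{i-1}\left(k^n-k^{i-1}\right).$$
   Context: Let $G=(V,E)$ be a finite tree with vertex set $V$ of size $k$, and fix an orientation of each edge, so that each edge becomes an ordered pair $e=(s,t)$. Each oriented edge $e=(s,t)$ acts on the set $V^*$ of finite words over the alphabet $V$ by the recursive rule: $e(\emptyset)=\emptyset$, $e(sw)=t\,e(w)$, $e(tw)=sw$, and $e(xw)=xw$ for $x\in V\setminus\{s,t\}$ (words are read left to right, $w\in V^*$). This action preserves word length. For $n\ge 1$, the Schreier graph $\Gamma_n^G$ is the multigraph with vertex set $V^n$ having, for each $u\in V^n$ and each oriented edge $e$ of $G$, one edge joining $u$ and $e(u)$, labelled $e$ (a loop if $e(u)=u$). For an edge $e$ of $G$, the $e$-cycles of $\Gamma_n^G$ are the subgraphs formed by an orbit of $e$ on $V^n$ together with the edges labelled $e$ between its vertices; an orbit of size $m$ gives an $e$-cycle of length $m$. An $e$-cycle of length $2^i$ consists of the words $xw$, $x\in\{s,t\}^i$, for a fixed suffix $w$ of length $n-i$ whose first letter (if any) is not in $\{s,t\}$. For vertices $u,v$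 of $\Gamma_n^G$, $n(u,v)$ is the number of vertices of $\Gamma_n^G$ strictly closer (in graph distance) to $u$ than to $v$. *)

theory Defs
  imports Main
begin

definition und_edges :: "('a \<times> 'a) set \<Rightarrow> ('a \<times> 'a) set" where
  "und_edges E = E \<union> converse E"

definition oriented_tree :: "'a set \<Rightarrow> ('a \<times> 'a) set \<Rightarrow> bool" where
  "oriented_tree V E \<longleftrightarrow> finite V \<and> V \<noteq> {} \<and> E \<subseteq> V \<times> V
     \<and> (\<forall>(s,t)\<in>E. s \<noteq> t \<and> (t,s) \<notin> E)
     \<and> (\<forall>x\<in>V. \<forall>y\<in>V. (x,y) \<in> (und_edges E)\<^sup>*)
     \<and> card E + 1 = card V"

fun act :: "'a \<times> 'a \<Rightarrow> 'a list \<Rightarrow> 'a list" where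
  "act e [] = []"
| "act (s,t) (x # w) =
     (if x = s then t # act (s,t) w else if x = t then s # w else x # w)"

definition words :: "'a set \<Rightarrow> nat \<Rightarrow> 'a list set" where
  "words V n = {w. length w = n \<and> set w \<subseteq> V}"

text \<open>Adjacency in the Schreier graph \<Gamma>_n (loops and multiplicities are irrelevant for distances).\<close>
definition schreier_adj :: "'a set \<Rightarrow> ('a \<times> 'a) set \<Rightarrow> nat \<Rightarrow> ('a list \<times> 'a list) set" where
  "schreier_adj V E n = {(u,v). u \<in> words V n \<and> v \<in> words V n \<and>
      (\<exists>e\<in>E. act e u = v \<or> act e v = u)}"

definition sdist :: "'a set \<Rightarrow> ('a \<times> 'a) set \<Rightarrow> nat \<Rightarrow> 'a list \<Rightarrow> 'a list \<Rightarrow> nat" where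
  "sdist V E n u v = (LEAST m. (u,v) \<in> (schreier_adj V E n) ^^ m)"

definition ncloser :: "'a set \<Rightarrow> ('a \<times> 'a) set \<Rightarrow> nat \<Rightarrow> 'a list \<Rightarrow> 'a list \<Rightarrow> nat" where
  "ncloser V E n u v = card {z \<in> words V n. sdist V E n z u < sdist V E n z v}"

end

theory Submission
  imports Defs
begin


definition cd :: "nat \<Rightarrow> nat \<Rightarrow> nat \<Rightarrow> nat" where
  "cd N a b = (if a \<le> b then min (b - a) (N - (b - a)) else min (a - b) (N - (a - b)))"

definition sc :: "nat \<Rightarrow> nat \<Rightarrow> nat" where
  "sc N b = (if b + 1 = N then 0 else b + 1)"

lemma modsub: "a < N \<Longrightarrow> b < (N::nat) \<Longrightarrow> (b + N - a) mod N = (if a \<le> b then b - a else b + N - a)"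
proof (cases "a \<le> b")
  case True
  assume "a < N" "b < N"
  then have e: "b + N - a = (b - a) + N" using True by arith
  have "(b + N - a) mod N = (b - a) mod N" by (simp only: e mod_add_self2)
  then show ?thesis using True \<open>b < N\<close> by simp
next
  case False
  assume "a < N" "b < N"
  then show ?thesis using False by simp
qed


definition dd :: "nat \<Rightarrow> nat \<Rightarrow> nat \<Rightarrow> nat" where
  "dd N a b = (if b \<le> a then a - b else a + N - b)"
lemma cd_dd: "a < N \<Longrightarrow> b < N \<Longrightarrow> cd N a b = min (dd N a b) (N - dd N a b)"
  unfolding cd_def dd_def by (cases "a \<le> b"; cases "a = b"; simp add: min_def; arith?)
lemma dd_sc: "a < N \<Longrightarrow> b < N \<Longrightarrow> dd N a (sc N b) = (if dd N a b = 0 then N - 1 else dd N a b - 1)"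
  unfolding dd_def sc_def by (cases "b + 1 = N"; cases "b \<le> a"; cases "a = b"; simp)
lemma dd_lt: "a < N \<Longrightarrow> b < N \<Longrightarrow> dd N a b < N"
  unfolding dd_def by auto
lemma minD: "(N::nat) = 2 * h \<Longrightarrow> D < N \<Longrightarrow> D' = (if D = 0 then N - 1 else D - 1) \<Longrightarrow>
   (min D (N - D) < min D' (N - D')) \<longleftrightarrow> (D = 0 \<or> h < D)"
  by (cases "D = 0"; cases "h < D"; simp add: min_def; arith?)
lemma minD2: "(N::nat) = 2 * h \<Longrightarrow> D < N \<Longrightarrow> D' = (if D = 0 then N - 1 else D - 1) \<Longrightarrow>
   (min D' (N - D') < min D (N - D)) \<longleftrightarrow> \<not> (D = 0 \<or> h < D)"
  by (cases "D = 0"; cases "h < D"; simp add: min_def; arith?)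
lemma good_dd: "N = 2 * h \<Longrightarrow> a < N \<Longrightarrow> b < N \<Longrightarrow>
  (cd N a b < cd N a (sc N b)) \<longleftrightarrow> (dd N a b = 0 \<or> h < dd N a b)"
proof -
  assume a: "N = 2 * h" "a < N" "b < N"
  have "sc N b < N" using a unfolding sc_def by auto
  then show ?thesis using a cd_dd[of a N b] cd_dd[of a N "sc N b"] dd_sc[of a N b] dd_lt[of a N b]
      minD[OF a(1) dd_lt[OF a(2,3)] refl] by simp
qed
lemma bad_dd: "N = 2 * h \<Longrightarrow> a < N \<Longrightarrow> b < N \<Longrightarrow>
  (cd N a (sc N b) < cd N a b) \<longleftrightarrow> \<not> (dd N a b = 0 \<or> h < dd N a b)"
proof -
  assume a: "N = 2 * h" "a < N" "b < N"
  have "sc N b < N" using a unfolding sc_def by auto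
  then show ?thesis using a cd_dd[of a N b] cd_dd[of a N "sc N b"] dd_sc[of a N b] dd_lt[of a N b]
      minD2[OF a(1) dd_lt[OF a(2,3)] refl] by simp
qed
lemma good_anti: "N = 2 * h \<Longrightarrow> a < h \<Longrightarrow> b < N \<Longrightarrow>
   (dd N a b = 0 \<or> h < dd N a b) \<longleftrightarrow> \<not> (dd N (a + h) b = 0 \<or> h < dd N (a + h) b)"
  unfolding dd_def by (cases "b \<le> a"; cases "b \<le> a + h"; simp; arith)
lemma good_ends: "N = 2 * h \<Longrightarrow> 1 \<le> h \<Longrightarrow> b < N \<Longrightarrow> b \<noteq> h - 1 \<Longrightarrow> b \<noteq> N - 1 \<Longrightarrow>
   (dd N 0 b = 0 \<or> h < dd N 0 b) \<longleftrightarrow> (dd N (N - 1) b = 0 \<or> h < dd N (N - 1) b)"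
  unfolding dd_def by (cases "b = 0"; simp; arith)

lemma dd_sca: "a < N \<Longrightarrow> c < N \<Longrightarrow> dd N (sc N a) c = (if dd N a c + 1 = N then 0 else dd N a c + 1)"
  unfolding dd_def sc_def by (cases "a + 1 = N"; cases "c \<le> a"; cases "c = a + 1"; simp; arith?)
lemma minstep: "(D::nat) < N \<Longrightarrow> D2 = (if D + 1 = N then 0 else D + 1) \<Longrightarrow>
   min D (N - D) \<le> Suc (min D2 (N - D2)) \<and> min D2 (N - D2) \<le> Suc (min D (N - D))"
  by (cases "D + 1 = N"; simp add: min_def; arith?)
lemma sc_lt: "b < N \<Longrightarrow> sc N b < N" unfolding sc_def by auto
lemma cd_step: "a < N \<Longrightarrow> a2 < N \<Longrightarrow> c < N \<Longrightarrow> (a2 = sc N a \<or> a = sc N a2) \<Longrightarrow> cd N a c \<le> Suc (cd N a2 c)"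
proof -
  assume h: "a < N" "a2 < N" "c < N" "a2 = sc N a \<or> a = sc N a2"
  show ?thesis
  proof (cases "a2 = sc N a")
    case True
    then show ?thesis using h cd_dd[of a N c] cd_dd[of a2 N c] dd_sca[of a N c] minstep[OF dd_lt[of a N c] refl] by simp
  next
    case False
    then have "a = sc N a2" using h by simp
    then show ?thesis using h cd_dd[of a N c] cd_dd[of a2 N c] dd_sca[of a2 N c] minstep[OF dd_lt[of a2 N c] refl] by simp
  qed
qed
lemma cd_alt: "a < N \<Longrightarrow> b < N \<Longrightarrow> cd N a b = min ((b + N - a) mod N) ((a + N - b) mod N)"
  by (cases "a \<le> b"; cases "a = b"; simp add: modsub cd_def min_def; arith?)
lemma sc_mod: "0 < N \<Longrightarrow> sc N ((a + j) mod N) = (a + Suc j) mod N"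
  unfolding sc_def by (simp add: mod_Suc)
lemma back_mod: "a < N \<Longrightarrow> b < (N::nat) \<Longrightarrow> (a + (b + N - a) mod N) mod N = b"
proof -
  assume "a < N" "b < N"
  have "(a + (b + N - a) mod N) mod N = (a + (b + N - a)) mod N" by (simp add: mod_add_right_eq)
  also have "a + (b + N - a) = b + N" using \<open>a < N\<close> by simp
  finally show ?thesis using \<open>b < N\<close> by simp
qed
lemma cd_self: "cd N a a = 0" by (simp add: cd_def)


fun PP :: "('a \<Rightarrow> 'a) \<Rightarrow> 'a \<Rightarrow> 'a list \<Rightarrow> nat \<Rightarrow> 'a list \<Rightarrow> 'a list" where
  "PP g s w 0 z = w"
| "PP g s w (Suc m) [] = replicate (Suc m) s @ w"
| "PP g s w (Suc m) (a # z) = (let Y = PP g s w m z in (if Y = z then g a else g (hd Y)) # Y)"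

fun QQ :: "('a \<Rightarrow> 'a) \<Rightarrow> 'a list \<Rightarrow> 'a list" where
  "QQ g [] = []"
| "QQ g (c # y) = (let Y = QQ g y in (if Y = y then g c else g (hd Y)) # Y)"

fun num :: "'a \<Rightarrow> 'a list \<Rightarrow> nat" where
  "num s [] = 0"
| "num s (x # y) = (if x = s then 1 else 0) + 2 * num s y"

lemma num_bound: "num s x < 2 ^ length x"
  by (induction x) auto

lemma num_app: "num s (x @ [a]) = num s x + (if a = s then 2 ^ length x else 0)"
  by (induction x) auto

lemma num_rep_s: "num s (replicate m s) + 1 = 2 ^ m"
  by (induction m) auto

lemma num_rep_t: "t \<noteq> s \<Longrightarrow> num s (replicate m t) = 0"
  by (induction m) auto

lemma num_inj: "length x = length y \<Longrightarrow> set x \<subseteq> {s,t} \<Longrightarrow> set y \<subseteq> {s,t} \<Longrightarrow> s \<noteq> t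
  \<Longrightarrow> num s x = num s y \<Longrightarrow> x = y"
proof (induction x arbitrary: y)
  case Nil then show ?case by simp
next
  case (Cons a x)
  then obtain b y' where y: "y = b # y'" by (cases y) auto
  from Cons y have "a = b" by (auto split: if_splits) presburger+
  with Cons y show ?case by auto
qed

lemma QQ_len: "length (QQ g y) = length y"
  by (induction y) (auto simp: Let_def)

lemma act_hd: "act (p,q) z \<noteq> z \<Longrightarrow> z \<noteq> [] \<and> (hd z = p \<or> hd z = q) \<and> (hd (act (p,q) z) = p \<or> hd (act (p,q) z) = q)"
  by (cases z) (auto split: if_splits)

lemma act_len: "length (act e z) = length z"
  by (induction e z rule: act.induct) auto

lemma act_set: "set z \<subseteq> V \<Longrightarrow> s \<in> V \<Longrightarrow> t \<in> V \<Longrightarrow> set (act (s,t) z) \<subseteq> V"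
  by (induction "(s,t)" z rule: act.induct) auto

lemma drop_rep: "drop m (replicate (Suc m) b @ w) = b # w"
  by (induction m) auto

locale cyc =
  fixes E :: "('a \<times> 'a) set" and g :: "'a \<Rightarrow> 'a" and s t :: 'a and w :: "'a list"
  assumes st: "s \<noteq> t" and gs: "g s = s" and gt: "g t = t" and grange: "g a = s \<or> g a = t"
    and gE: "(p,q) \<in> E \<Longrightarrow> (p,q) \<noteq> (s,t) \<Longrightarrow> g p = g q"
    and hdw: "w \<noteq> [] \<Longrightarrow> hd w \<noteq> s \<and> hd w \<noteq> t"
begin

definition inC :: "nat \<Rightarrow> 'a list \<Rightarrow> bool" where
  "inC m z \<longleftrightarrow> (\<exists>x. z = x @ w \<and> length x = m \<and> set x \<subseteq> {s,t})"

lemma inC_0: "inC 0 z \<longleftrightarrow> z = w" by (auto simp: inC_def)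

lemma inC_Suc: "inC (Suc m) (a # z) \<longleftrightarrow> (a = s \<or> a = t) \<and> inC m z"
proof
  assume "inC (Suc m) (a # z)"
  then obtain x where x: "a # z = x @ w" "length x = Suc m" "set x \<subseteq> {s,t}" by (auto simp: inC_def)
  then obtain b x' where "x = b # x'" by (cases x) auto
  with x show "(a = s \<or> a = t) \<and> inC m z" by (auto simp: inC_def)
next
  assume "(a = s \<or> a = t) \<and> inC m z"
  then obtain x where "z = x @ w" "length x = m" "set x \<subseteq> {s,t}" "a = s \<or> a = t" by (auto simp: inC_def)
  then show "inC (Suc m) (a # z)" unfolding inC_def by (intro exI[of _ "a # x"]) auto
qed

lemma inC_Nil: "inC (Suc m) [] = False" by (auto simp: inC_def)

lemma ga: "g a = a \<longleftrightarrow> a = s \<or> a = t"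
  using gs gt grange by metis

lemma PP_fix: "PP g s w m z = z \<longleftrightarrow> inC m z"
proof (induction m arbitrary: z)
  case 0 then show ?case by (auto simp: inC_0)
next
  case (Suc m)
  show ?case
  proof (cases z)
    case Nil then show ?thesis by (simp add: inC_Nil)
  next
    case (Cons a z')
    then show ?thesis using Suc[of z'] by (auto simp: Let_def inC_Suc ga)
  qed
qed

lemma PP_inC: "inC m (PP g s w m z)"
proof (induction m arbitrary: z)
  case 0 then show ?case by (simp add: inC_0)
next
  case (Suc m)
  show ?case
  proof (cases z)
    case Nil then show ?thesis by (auto simp: inC_def)
  next
    case (Cons a z')
    then show ?thesis using Suc[of z'] grange by (auto simp: Let_def inC_Suc)
  qed
qed

lemma act_w: "act (s,t) w = w"
  using hdw by (cases w) auto

lemma act_C: "set x \<subseteq> {s,t} \<Longrightarrow> \<exists>y. act (s,t) (x @ w) = y @ w \<and> length y = length x \<and> set y \<subseteq> {s,t}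
   \<and> num s y = (num s x + 1) mod 2 ^ length x"
proof (induction x)
  case Nil then show ?case using act_w by simp
next
  case (Cons a x)
  then obtain y where y: "act (s,t) (x @ w) = y @ w" "length y = length x" "set y \<subseteq> {s,t}"
     "num s y = (num s x + 1) mod 2 ^ length x" by auto
  show ?case
  proof (cases "a = s")
    case True
    have "num s (t # y) = (num s (a # x) + 1) mod 2 ^ length (a # x)"
      using True st y(4) by (simp add: mult_mod_right)
    then show ?thesis using True y st by (intro exI[of _ "t # y"]) auto
  next
    case False
    then have "a = t" using Cons by auto
    have "num s (s # x) = (num s (a # x) + 1) mod 2 ^ length (a # x)"
      using False num_bound[of s x] by simp
    then show ?thesis using False \<open>a = t\<close> Cons by (intro exI[of _ "s # x"]) auto
  qed
qed

lemma act_C_rev: "inC m (act (s,t) z) \<Longrightarrow> inC m z"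
proof (induction m arbitrary: z)
  case 0
  then have a: "act (s,t) z = w" by (simp add: inC_0)
  have "z = w" using a hdw st by (cases z) (auto split: if_splits)
  then show ?case by (simp add: inC_0)
next
  case (Suc m)
  show ?case
  proof (cases z)
    case Nil then show ?thesis using Suc by simp
  next
    case (Cons a z')
    show ?thesis
    proof (cases "a = s")
      case True
      then show ?thesis using Suc Cons by (auto simp: inC_Suc)
    next
      case False
      then show ?thesis using Suc Cons st by (auto simp: inC_Suc split: if_splits)
    qed
  qed
qed

lemma edge: "(p,q) \<in> E \<Longrightarrow> PP g s w m (act (p,q) z) = PP g s w m z \<or> ((p,q) = (s,t) \<and> inC m z)"
proof (induction m arbitrary: z)
  case 0 then show ?case by simp
next
  case (Suc m)
  show ?case
  proof (cases z)
    case Nil then show ?thesis by simp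
  next
    case (Cons a z')
    define Y where "Y = PP g s w m z'"
    show ?thesis
    proof (cases "a = p")
      case True
      have az: "act (p,q) z = q # act (p,q) z'" using True Cons by simp
      show ?thesis
      proof (cases "(p,q) = (s,t) \<and> inC m z'")
        case True
        then have "inC (Suc m) z" using Cons \<open>a = p\<close> by (simp add: inC_Suc)
        then show ?thesis using True by simp
      next
        case nex: False
        then have YY: "PP g s w m (act (p,q) z') = Y" using Suc.IH[OF Suc.prems, of z'] Y_def by auto
        show ?thesis
        proof (cases "Y = z'")
          case True
          have ne: "(p,q) \<noteq> (s,t)" using nex \<open>Y = z'\<close> Y_def PP_fix by auto
          have gpq: "g p = g q" using gE[OF Suc.prems ne] .
          show ?thesis
          proof (cases "act (p,q) z' = z'")
            case True
            then show ?thesis using az Cons gpq \<open>a = p\<close> by (simp add: Let_def)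
          next
            case False
            from act_hd[OF False] have "hd z' = p \<or> hd z' = q" by auto
            then have "g (hd z') = g p" using gpq by auto
            moreover have "Y \<noteq> act (p,q) z'" using False True by simp
            ultimately show ?thesis using az Cons True YY \<open>a = p\<close> by (simp add: Let_def Y_def[symmetric])
          qed
        next
          case False
          show ?thesis
          proof (cases "Y = act (p,q) z'")
            case True
            have z'ne: "act (p,q) z' \<noteq> z'" using True False by simp
            have ne: "(p,q) \<noteq> (s,t)"
            proof
              assume pq: "(p,q) = (s,t)"
              have "inC m (act (p,q) z')" using True YY PP_fix by metis
              then have "inC m z'" using act_C_rev pq by simp
              then show False using False Y_def PP_fix by simp
            qed
            have gpq: "g p = g q" using gE[OF Suc.prems ne] .
            from act_hd[OF z'ne] have "hd (act (p,q) z') = p \<or> hd (act (p,q) z') = q" by auto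
            then have "g (hd Y) = g q" using gpq True by auto
            then show ?thesis using az Cons True YY False by (simp add: Let_def Y_def[symmetric])
          next
            case False2: False
            then show ?thesis using az Cons YY False by (simp add: Let_def Y_def[symmetric])
          qed
        qed
      qed
    next
      case anp: False
      show ?thesis
      proof (cases "a = q")
        case True
        have az: "act (p,q) z = p # z'" using True anp Cons by simp
        show ?thesis
        proof (cases "(p,q) = (s,t) \<and> Y = z'")
          case True
          then have "inC (Suc m) z" using Cons \<open>a = q\<close> Y_def PP_fix by (simp add: inC_Suc)
          then show ?thesis using True by simp
        next
          case False
          show ?thesis
          proof (cases "Y = z'")
            case True
            then have ne: "(p,q) \<noteq> (s,t)" using False by simp
            have gpq: "g p = g q" using gE[OF Suc.prems ne] .
            then show ?thesis using az Cons True \<open>a = q\<close> by (simp add: Let_def Y_def[symmetric])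
          next
            case False
            then show ?thesis using az Cons by (simp add: Let_def Y_def[symmetric])
          qed
        qed
      next
        case False
        then show ?thesis using anp Cons by simp
      qed
    qed
  qed
qed

lemma const: "1 \<le> m \<Longrightarrow> length z = m + length w \<Longrightarrow> \<not>(\<exists>a. (a = s \<or> a = t) \<and> drop (m-1) z = a # w)
   \<Longrightarrow> \<exists>b. (b = s \<or> b = t) \<and> PP g s w m z = replicate m b @ w"
proof (induction m arbitrary: z rule: nat_induct_at_least)
  case base
  then obtain c r where z: "z = c # r" by (cases z) auto
  show ?case
  proof (cases "r = w")
    case True
    then have "c \<noteq> s \<and> c \<noteq> t" using base z by auto
    then show ?thesis using z True grange by (auto simp: Let_def)
  next
    case False
    then show ?thesis using z grange by (auto simp: Let_def)
  qed
next
  case (Suc m)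
  then obtain c r where z: "z = c # r" by (cases z) auto
  have "drop (Suc m - 1) z = drop (m - 1) r" using z Suc.hyps by (cases m) auto
  then obtain b where b: "b = s \<or> b = t" "PP g s w m r = replicate m b @ w"
    using Suc z by auto
  have "PP g s w m r \<noteq> r"
  proof
    assume "PP g s w m r = r"
    then have "drop (m - 1) r = b # w" using b Suc.hyps drop_rep[of "m-1" b w]
      by simp
    then show False using Suc.prems b \<open>drop (Suc m - 1) z = drop (m - 1) r\<close> by auto
  qed
  moreover have "hd (replicate m b @ w) = b" using Suc.hyps by (cases m) auto
  ultimately show ?case using b z gs gt by (auto simp: Let_def intro!: exI[of _ b])
qed

lemma QQ_PP: "a = s \<or> a = t \<Longrightarrow> PP g s w (length y + 1) (y @ a # w) = QQ g y @ a # w"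
proof (induction y)
  case Nil then show ?case using ga by (simp add: Let_def)
next
  case (Cons c y)
  have "QQ g y = y \<or> (y \<noteq> [] \<and> QQ g y \<noteq> [])" using QQ_len[of g y] by auto
  then show ?case using Cons by (auto simp: Let_def)
qed

lemma QQ_set: "set (QQ g y) \<subseteq> {s,t}"
proof (induction y)
  case (Cons c y) then show ?case using grange by (auto simp: Let_def)
qed simp

end


lemma conn_card:
  assumes fin: "finite V" and FV: "F \<subseteq> V \<times> V"
    and conn: "\<forall>x\<in>V. \<forall>y\<in>V. (x,y) \<in> (und_edges F)\<^sup>*" and r: "r \<in> V"
  shows "card V \<le> card F + 1"
proof -
  let ?U = "und_edges F"
  define d where "d x = (LEAST m. (x, r) \<in> ?U ^^ m)" for x
  have ex: "\<exists>m. (x,r) \<in> ?U^^m" if "x \<in> V" for x using conn r that rtrancl_power by blast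
  have dpath: "(x, r) \<in> ?U ^^ d x" if "x \<in> V" for x unfolding d_def using ex[OF that] by (rule LeastI_ex)
  have dmin: "d x \<le> m" if "(x,r) \<in> ?U^^m" for x m unfolding d_def using that by (rule Least_le)
  have par: "\<exists>y. (x,y) \<in> ?U \<and> d y < d x" if "x \<in> V - {r}" for x
  proof -
    have "d x \<noteq> 0"
    proof
      assume "d x = 0"
      have xV: "x \<in> V" using that by simp
      have "(x,r) \<in> ?U^^(d x)" by (rule dpath[OF xV])
      then have "(x,r) \<in> ?U^^0" using \<open>d x = 0\<close> by (simp only:)
      then have "x = r" by simp
      then show False using that by simp
    qed
    then obtain m where m: "d x = Suc m" using not0_implies_Suc by blast
    have xV: "x \<in> V" using that by simp
    have "(x, r) \<in> ?U ^^ Suc m" using dpath[OF xV] unfolding m .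
    from relpow_Suc_D2[OF this] obtain y where y: "(x,y) \<in> ?U" "(y,r) \<in> ?U^^m" by (elim exE conjE)
    have "d y \<le> m" using dmin[OF y(2)] .
    then show ?thesis using y(1) m by (intro exI[of _ y]) simp
  qed
  define p where "p x = (SOME y. (x,y) \<in> ?U \<and> d y < d x)" for x
  have pp: "(x, p x) \<in> ?U \<and> d (p x) < d x" if "x \<in> V - {r}" for x
    using someI_ex[OF par[OF that]] unfolding p_def .
  define h where "h x = (if (x, p x) \<in> F then (x, p x) else (p x, x))" for x
  have hF: "h ` (V - {r}) \<subseteq> F" using pp by (auto simp: h_def und_edges_def)
  have hinj: "inj_on h (V - {r})"
  proof (rule inj_onI)
    fix x y assume x: "x \<in> V - {r}" and y: "y \<in> V - {r}" and e: "h x = h y"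
    have px: "d (p x) < d x" and py: "d (p y) < d y" using pp[OF x] pp[OF y] by auto
    have hx: "h x = (x, p x) \<or> h x = (p x, x)" and hy: "h y = (y, p y) \<or> h y = (p y, y)"
      unfolding h_def by auto
    show "x = y"
    proof (rule ccontr)
      assume ne: "x \<noteq> y"
      from hx hy e ne have "x = p y \<and> y = p x" by auto
      then show False using px py by (metis less_asym)
    qed
  qed
  have "finite F" using FV fin by (meson finite_SigmaI finite_subset)
  then have "card (V - {r}) \<le> card F" using card_inj_on_le[OF hinj hF] by simp
  then show ?thesis using r fin by (simp add: card_Diff_singleton)
qed

lemma und_sym: "(x,y) \<in> (und_edges F)\<^sup>* \<Longrightarrow> (y,x) \<in> (und_edges F)\<^sup>*"
proof -
  assume "(x,y) \<in> (und_edges F)\<^sup>*"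
  then have "(y,x) \<in> ((und_edges F)\<^sup>*)\<inverse>" by simp
  also have "((und_edges F)\<^sup>*)\<inverse> = ((und_edges F)\<inverse>)\<^sup>*" by (simp add: rtrancl_converse)
  also have "(und_edges F)\<inverse> = und_edges F" by (auto simp: und_edges_def)
  finally show ?thesis .
qed

lemma sep:
  assumes T: "oriented_tree V E" and e: "(s,t) \<in> E"
  shows "(t, s) \<notin> (und_edges (E - {(s,t)}))\<^sup>*"
proof
  let ?U' = "und_edges (E - {(s,t)})"
  assume h: "(t,s) \<in> ?U'\<^sup>*"
  have sub: "und_edges E \<subseteq> ?U'\<^sup>*"
  proof
    fix ab assume ab: "ab \<in> und_edges E"
    obtain a b where abe: "ab = (a,b)" by (cases ab)
    show "ab \<in> ?U'\<^sup>*"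
    proof (cases "(a,b) = (s,t) \<or> (b,a) = (s,t)")
      case True
      then show ?thesis using h und_sym[OF h] abe by auto
    next
      case False
      then have "(a,b) \<in> ?U'" using ab abe by (auto simp: und_edges_def)
      then show ?thesis using abe by auto
    qed
  qed
  have "(und_edges E)\<^sup>* \<subseteq> ?U'\<^sup>*" using rtrancl_subset_rtrancl[OF sub] by simp
  then have conn': "\<forall>x\<in>V. \<forall>y\<in>V. (x,y) \<in> ?U'\<^sup>*" using T unfolding oriented_tree_def by blast
  have fin: "finite V" and EV: "E \<subseteq> V \<times> V" and cE: "card E + 1 = card V"
    using T unfolding oriented_tree_def by auto
  have sV: "s \<in> V" using e EV by auto
  have "card V \<le> card (E - {(s,t)}) + 1" using conn_card[OF fin _ conn' sV] EV by auto
  moreover have "finite E" using EV fin by (meson finite_SigmaI finite_subset)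
  moreover have "card E > 0" using \<open>finite E\<close> e by (auto simp: card_gt_0_iff)
  ultimately show False using cE e by (simp add: card_Diff_singleton)
qed

definition sig :: "('a \<times> 'a) set \<Rightarrow> 'a \<Rightarrow> 'a \<Rightarrow> 'a \<Rightarrow> 'a" where
  "sig E s t a = (if (a, s) \<in> (und_edges (E - {(s,t)}))\<^sup>* then s else t)"

lemma sig_props:
  assumes T: "oriented_tree V E" and e: "(s,t) \<in> E"
  shows "sig E s t s = s" "sig E s t t = t" "sig E s t a = s \<or> sig E s t a = t"
    "(p,q) \<in> E \<Longrightarrow> (p,q) \<noteq> (s,t) \<Longrightarrow> sig E s t p = sig E s t q"
proof -
  show "sig E s t s = s" by (simp add: sig_def)
  show "sig E s t t = t" using sep[OF T e] by (simp add: sig_def)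
  show "sig E s t a = s \<or> sig E s t a = t" by (simp add: sig_def)
  assume pq: "(p,q) \<in> E" "(p,q) \<noteq> (s,t)"
  let ?U' = "und_edges (E - {(s,t)})"
  have "(p,q) \<in> ?U'" "(q,p) \<in> ?U'" using pq by (auto simp: und_edges_def)
  then have "(p,s) \<in> ?U'\<^sup>* \<longleftrightarrow> (q,s) \<in> ?U'\<^sup>*"
    by (meson converse_rtrancl_into_rtrancl)
  then show "sig E s t p = sig E s t q" by (simp add: sig_def)
qed


lemma adj_words: "(x,y) \<in> schreier_adj V E n \<Longrightarrow> x \<in> words V n \<and> y \<in> words V n"
  unfolding schreier_adj_def by auto

lemma adj_sym: "(x,y) \<in> schreier_adj V E n \<Longrightarrow> (y,x) \<in> schreier_adj V E n"
  unfolding schreier_adj_def by auto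

lemma relpow_sym:
  assumes sym: "\<And>x y. (x,y) \<in> R \<Longrightarrow> (y,x) \<in> R"
  shows "(x,y) \<in> R ^^ m \<Longrightarrow> (y,x) \<in> R ^^ m"
proof (induction m arbitrary: x)
  case 0 then show ?case by simp
next
  case (Suc m)
  from relpow_Suc_D2[OF Suc.prems] obtain z where z: "(x,z) \<in> R" "(z,y) \<in> R ^^ m" by (elim exE conjE)
  have "(y,z) \<in> R ^^ m" using Suc.IH[OF z(2)] .
  moreover have "(z,x) \<in> R" using sym[OF z(1)] .
  ultimately show ?case by (rule relpow_Suc_I)
qed

lemma act_set2: "set z \<subseteq> V \<Longrightarrow> s \<in> V \<Longrightarrow> t \<in> V \<Longrightarrow> set (act (s,t) z) \<subseteq> V"
  by (induction z) auto

lemma act_words: "s \<in> V \<Longrightarrow> t \<in> V \<Longrightarrow> z \<in> words V n \<Longrightarrow> act (s,t) z \<in> words V n"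
proof -
  assume a: "s \<in> V" "t \<in> V" "z \<in> words V n"
  have "length (act (s,t) z) = length z" by (induction "(s,t)" z rule: act.induct) auto
  moreover have "set (act (s,t) z) \<subseteq> V" using a(3) act_set2[OF _ a(1,2)] unfolding words_def by blast
  ultimately show ?thesis using a(3) unfolding words_def by simp
qed

lemma tree_move:
  assumes EV: "E \<subseteq> V \<times> V" and noloop: "\<forall>(p,q)\<in>E. p \<noteq> q"
    and cd: "(c,d) \<in> (und_edges E)\<^sup>*" and z: "z \<in> words V n"
  shows "(c # z, d # z) \<in> (schreier_adj V E (Suc n))\<^sup>*"
  using cd
proof (induction rule: rtrancl_induct)
  case base then show ?case by simp
next
  case (step d0 d)
  have "(d0 # z, d # z) \<in> schreier_adj V E (Suc n)"
  proof (cases "(d0,d) \<in> E")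
    case True
    then have "d0 \<noteq> d" "d0 \<in> V" "d \<in> V" using noloop EV by auto
    moreover have "act (d0,d) (d # z) = d0 # z" using \<open>d0 \<noteq> d\<close> by simp
    ultimately show ?thesis using True z unfolding schreier_adj_def words_def by (auto intro!: bexI[of _ "(d0,d)"])
  next
    case False
    then have de: "(d,d0) \<in> E" using step(2) by (auto simp: und_edges_def)
    then have "d0 \<noteq> d" "d0 \<in> V" "d \<in> V" using noloop EV by auto
    moreover have "act (d,d0) (d0 # z) = d # z" using \<open>d0 \<noteq> d\<close> by simp
    ultimately show ?thesis using de z unfolding schreier_adj_def words_def by (auto intro!: bexI[of _ "(d,d0)"])
  qed
  then show ?case by (rule rtrancl_into_rtrancl[OF step(3)])
qed

lemma lift:
  assumes EV: "E \<subseteq> V \<times> V" and noloop: "\<forall>(p,q)\<in>E. p \<noteq> q"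
    and e: "(y1,y2) \<in> schreier_adj V E n"
  shows "\<exists>c d. c \<in> V \<and> d \<in> V \<and> (c # y1, d # y2) \<in> schreier_adj V E (Suc n)"
proof -
  from e obtain p q where pq: "(p,q) \<in> E" "act (p,q) y1 = y2 \<or> act (p,q) y2 = y1"
    and w: "y1 \<in> words V n" "y2 \<in> words V n"
    unfolding schreier_adj_def by auto
  have pqV: "p \<in> V" "q \<in> V" "p \<noteq> q" using pq(1) EV noloop by auto
  show ?thesis
  proof (cases "act (p,q) y1 = y2")
    case True
    have "act (p,q) (p # y1) = q # y2" using True by simp
    then have "(p # y1, q # y2) \<in> schreier_adj V E (Suc n)"
      using pq(1) pqV w unfolding schreier_adj_def words_def by (auto intro!: bexI[of _ "(p,q)"])
    then show ?thesis using pqV by blast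
  next
    case False
    then have "act (p,q) y2 = y1" using pq(2) by simp
    then have "act (p,q) (p # y2) = q # y1" by simp
    then have "(q # y1, p # y2) \<in> schreier_adj V E (Suc n)"
      using pq(1) pqV w unfolding schreier_adj_def words_def by (auto intro!: bexI[of _ "(p,q)"])
    then show ?thesis using pqV by blast
  qed
qed

lemma conn_words:
  assumes EV: "E \<subseteq> V \<times> V" and noloop: "\<forall>(p,q)\<in>E. p \<noteq> q"
    and Tc: "\<forall>x\<in>V. \<forall>y\<in>V. (x,y) \<in> (und_edges E)\<^sup>*"
  shows "x \<in> words V n \<Longrightarrow> y \<in> words V n \<Longrightarrow> (x,y) \<in> (schreier_adj V E n)\<^sup>*"
proof (induction n arbitrary: x y)
  case 0 then show ?case by (simp add: words_def)
next
  case (Suc n)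
  obtain a x' where x: "x = a # x'" "a \<in> V" "x' \<in> words V n"
    using Suc.prems(1) unfolding words_def by (cases x) auto
  obtain b y' where y: "y = b # y'" "b \<in> V" "y' \<in> words V n"
    using Suc.prems(2) unfolding words_def by (cases y) auto
  have main: "(x', y0) \<in> (schreier_adj V E n)\<^sup>* \<Longrightarrow> \<forall>b\<in>V. (a # x', b # y0) \<in> (schreier_adj V E (Suc n))\<^sup>*" for y0
  proof (induction rule: rtrancl_induct)
    case base
    show ?case using tree_move[OF EV noloop _ x(3)] Tc x(2) by blast
  next
    case (step y0 y1)
    obtain c d where cd: "c \<in> V" "d \<in> V" "(c # y0, d # y1) \<in> schreier_adj V E (Suc n)"
      using lift[OF EV noloop step(2)] by blast
    have y1w: "y1 \<in> words V n" using adj_words[OF step(2)] by simp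
    show ?case
    proof
      fix b assume bV: "b \<in> V"
      have 1: "(a # x', c # y0) \<in> (schreier_adj V E (Suc n))\<^sup>*" using step(3) cd(1) by blast
      have 2: "(d # y1, b # y1) \<in> (schreier_adj V E (Suc n))\<^sup>*"
        using tree_move[OF EV noloop _ y1w] Tc cd(2) bV by blast
      show "(a # x', b # y1) \<in> (schreier_adj V E (Suc n))\<^sup>*"
        using rtrancl_trans[OF rtrancl_into_rtrancl[OF 1 cd(3)] 2] .
    qed
  qed
  have "(x', y') \<in> (schreier_adj V E n)\<^sup>*" using Suc.IH[OF x(3) y(3)] .
  then show ?case using main y(2) x(1) y(1) by blast
qed


locale mainl = cyc E g s t w for E :: "('a \<times> 'a) set" and g s t w +
  fixes V :: "'a set" and n i :: nat
  assumes EV: "E \<subseteq> V \<times> V" and sV: "s \<in> V" and tV: "t \<in> V" and wV: "set w \<subseteq> V"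
    and lw: "length w = n - i" and iln: "i \<le> n" and i1: "1 \<le> i"
    and conn: "\<And>x y. x \<in> words V n \<Longrightarrow> y \<in> words V n \<Longrightarrow> (x,y) \<in> (schreier_adj V E n)\<^sup>*"
    and eE: "(s,t) \<in> E"
begin

abbreviation "R \<equiv> schreier_adj V E n"
abbreviation "W \<equiv> words V n"
abbreviation "N \<equiv> (2::nat) ^ i"
abbreviation "sd \<equiv> sdist V E n"

definition piC :: "'a list \<Rightarrow> 'a list" where "piC z = PP g s w i z"
definition idx :: "'a list \<Rightarrow> nat" where "idx c = num s (take i c)"

lemma N_pos: "0 < N" by simp

lemma inC_E: "inC i c \<Longrightarrow> \<exists>x. c = x @ w \<and> length x = i \<and> set x \<subseteq> {s,t}"
  by (simp add: inC_def)

lemma C_W: "inC i c \<Longrightarrow> c \<in> W"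
  using sV tV wV lw iln unfolding inC_def words_def by auto

lemma idx_app: "length x = i \<Longrightarrow> idx (x @ w) = num s x"
  by (simp add: idx_def)

lemma idx_lt: "inC i c \<Longrightarrow> idx c < N"
  using num_bound unfolding inC_def idx_def by auto

lemma idx_inj: "inC i c \<Longrightarrow> inC i c' \<Longrightarrow> idx c = idx c' \<Longrightarrow> c = c'"
proof -
  assume "inC i c" "inC i c'" "idx c = idx c'"
  then obtain x x' where x: "c = x @ w" "length x = i" "set x \<subseteq> {s,t}"
    and x': "c' = x' @ w" "length x' = i" "set x' \<subseteq> {s,t}" and e: "num s x = num s x'"
    unfolding inC_def idx_def by auto
  have "x = x'" using num_inj[OF _ x(3) x'(3) st e] x(2) x'(2) by simp
  then show ?thesis using x x' by simp
qed

lemma step_C: "inC i c \<Longrightarrow> inC i (act (s,t) c) \<and> idx (act (s,t) c) = sc N (idx c)"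
proof -
  assume "inC i c"
  then obtain x where x: "c = x @ w" "length x = i" "set x \<subseteq> {s,t}" unfolding inC_def by auto
  obtain y where y: "act (s,t) (x @ w) = y @ w" "length y = length x" "set y \<subseteq> {s,t}"
     "num s y = (num s x + 1) mod 2 ^ length x" using act_C[OF x(3)] by blast
  have "inC i (act (s,t) c)" using x y unfolding inC_def by auto
  moreover have "idx (act (s,t) c) = (num s x + 1) mod N" using x y idx_app by simp
  moreover have "(num s x + 1) mod N = sc N (num s x)"
    using sc_mod[OF N_pos, of "num s x" 0] num_bound[of s x] x(2) by simp
  ultimately show ?thesis using x idx_app by simp
qed

lemma edgeR: "inC i c \<Longrightarrow> (c, act (s,t) c) \<in> R"
proof -
  assume c: "inC i c"
  have "c \<in> W" "act (s,t) c \<in> W" using C_W c step_C by auto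
  then show ?thesis unfolding schreier_adj_def using eE by blast
qed

lemma iter: "inC i c \<Longrightarrow> (c, (act (s,t) ^^ j) c) \<in> R ^^ j \<and> inC i ((act (s,t) ^^ j) c)
   \<and> idx ((act (s,t) ^^ j) c) = (idx c + j) mod N"
proof (induction j)
  case 0 then show ?case using idx_lt by simp
next
  case (Suc j)
  let ?c = "(act (s,t) ^^ j) c"
  have ih: "(c, ?c) \<in> R ^^ j" "inC i ?c" "idx ?c = (idx c + j) mod N" using Suc by auto
  have eq: "(act (s,t) ^^ Suc j) c = act (s,t) ?c" by simp
  have "(c, act (s,t) ?c) \<in> R ^^ Suc j" using relpow_Suc_I[OF ih(1) edgeR[OF ih(2)]] .
  moreover have "inC i (act (s,t) ?c)" using step_C[OF ih(2)] by simp
  moreover have "idx (act (s,t) ?c) = (idx c + Suc j) mod N"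
    using step_C[OF ih(2)] ih(3) sc_mod[OF N_pos] by simp
  ultimately show ?case unfolding eq by simp
qed

lemma sd_path: "x \<in> W \<Longrightarrow> y \<in> W \<Longrightarrow> (x,y) \<in> R ^^ (sd x y)"
proof -
  assume "x \<in> W" "y \<in> W"
  then have "\<exists>m. (x,y) \<in> R ^^ m" using conn rtrancl_power by blast
  then show ?thesis unfolding sdist_def by (rule LeastI_ex)
qed

lemma sd_le: "(x,y) \<in> R ^^ m \<Longrightarrow> sd x y \<le> m"
  unfolding sdist_def by (rule Least_le)

lemma sd_refl: "sd x x = 0"
  using sd_le[of x x 0] by simp

lemma cyc_upper: "inC i c \<Longrightarrow> inC i c' \<Longrightarrow> sd c c' \<le> cd N (idx c) (idx c')"
proof -
  assume c: "inC i c" and c': "inC i c'"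
  define j1 where "j1 = (idx c' + N - idx c) mod N"
  define j2 where "j2 = (idx c + N - idx c') mod N"
  have l: "idx c < N" "idx c' < N" using idx_lt c c' by auto
  from iter[OF c, of j1] have p1: "(c, (act (s,t) ^^ j1) c) \<in> R ^^ j1"
    and q1: "inC i ((act (s,t) ^^ j1) c)" "idx ((act (s,t) ^^ j1) c) = (idx c + j1) mod N" by auto
  have "(idx c + j1) mod N = idx c'" unfolding j1_def using back_mod[OF l] .
  then have "(act (s,t) ^^ j1) c = c'" using idx_inj[OF q1(1) c'] q1(2) by simp
  then have "sd c c' \<le> j1" using sd_le p1 by simp
  from iter[OF c', of j2] have p2: "(c', (act (s,t) ^^ j2) c') \<in> R ^^ j2"
    and q2: "inC i ((act (s,t) ^^ j2) c')" "idx ((act (s,t) ^^ j2) c') = (idx c' + j2) mod N" by auto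
  have "(idx c' + j2) mod N = idx c" unfolding j2_def using back_mod[OF l(2) l(1)] .
  then have "(act (s,t) ^^ j2) c' = c" using idx_inj[OF q2(1) c] q2(2) by simp
  then have "(c', c) \<in> R ^^ j2" using p2 by simp
  then have "(c, c') \<in> R ^^ j2" using relpow_sym[OF adj_sym] by blast
  then have "sd c c' \<le> j2" using sd_le by simp
  have "cd N (idx c) (idx c') = min j1 j2" unfolding j1_def j2_def using cd_alt[OF l] .
  then show ?thesis using \<open>sd c c' \<le> j1\<close> \<open>sd c c' \<le> j2\<close> by simp
qed

lemma pi_C: "inC i (piC z)" unfolding piC_def by (rule PP_inC)
lemma pi_fix: "inC i c \<Longrightarrow> piC c = c" unfolding piC_def using PP_fix by simp
lemma pi_W: "piC z \<in> W" using C_W pi_C by simp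

lemma lower: "(z,c) \<in> R ^^ m \<Longrightarrow> inC i c \<Longrightarrow> sd z (piC z) + cd N (idx (piC z)) (idx c) \<le> m"
proof (induction m arbitrary: z)
  case 0
  then have "z = c" by simp
  then show ?case using 0 pi_fix sd_refl cd_self by simp
next
  case (Suc m)
  from relpow_Suc_D2[OF Suc.prems(1)] obtain y where y: "(z,y) \<in> R" "(y,c) \<in> R ^^ m"
    by (elim exE conjE)
  have ih: "sd y (piC y) + cd N (idx (piC y)) (idx c) \<le> m" using Suc.IH[OF y(2) Suc.prems(2)] .
  have zW: "z \<in> W" and yW: "y \<in> W" using adj_words[OF y(1)] by auto
  have cl: "idx c < N" using idx_lt Suc.prems(2) by simp
  from y(1) obtain p q where pq: "(p,q) \<in> E" "act (p,q) z = y \<or> act (p,q) y = z"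
    unfolding schreier_adj_def by auto
  have same: "sd z (piC z) + cd N (idx (piC z)) (idx c) \<le> Suc m" if eqp: "piC z = piC y"
  proof -
    have "(z, piC y) \<in> R ^^ Suc (sd y (piC y))"
      using relpow_Suc_I2[OF y(1) sd_path[OF yW pi_W]] .
    then have "sd z (piC z) \<le> Suc (sd y (piC y))" using sd_le eqp by simp
    then show ?thesis using ih eqp by simp
  qed
  show ?case
  proof (cases "act (p,q) z = y")
    case True
    from edge[OF pq(1), of i z] True
    have "piC y = piC z \<or> ((p,q) = (s,t) \<and> inC i z)" unfolding piC_def by simp
    then show ?thesis
    proof
      assume "piC y = piC z" then show ?thesis using same by simp
    next
      assume a: "(p,q) = (s,t) \<and> inC i z"
      then have yz: "y = act (s,t) z" using True by simp
      have zC: "inC i z" using a by simp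
      have yC: "inC i y" and iy: "idx y = sc N (idx z)" using step_C[OF zC] yz by auto
      have "cd N (idx z) (idx c) \<le> Suc (cd N (idx y) (idx c))"
        using cd_step[OF idx_lt[OF zC] idx_lt[OF yC] cl] iy by simp
      then show ?thesis using ih pi_fix[OF zC] pi_fix[OF yC] sd_refl by simp
    qed
  next
    case False
    then have yz0: "act (p,q) y = z" using pq(2) by simp
    from edge[OF pq(1), of i y] yz0
    have "piC z = piC y \<or> ((p,q) = (s,t) \<and> inC i y)" unfolding piC_def by simp
    then show ?thesis
    proof
      assume "piC z = piC y" then show ?thesis using same by simp
    next
      assume a: "(p,q) = (s,t) \<and> inC i y"
      then have yz: "z = act (s,t) y" using yz0 by simp
      have yC: "inC i y" using a by simp
      have zC: "inC i z" and iz: "idx z = sc N (idx y)" using step_C[OF yC] yz by auto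
      have "cd N (idx z) (idx c) \<le> Suc (cd N (idx y) (idx c))"
        using cd_step[OF idx_lt[OF zC] idx_lt[OF yC] cl] iz by simp
      then show ?thesis using ih pi_fix[OF zC] pi_fix[OF yC] sd_refl by simp
    qed
  qed
qed

lemma exact: "z \<in> W \<Longrightarrow> inC i c \<Longrightarrow> sd z c = sd z (piC z) + cd N (idx (piC z)) (idx c)"
proof -
  assume z: "z \<in> W" and c: "inC i c"
  have cW: "c \<in> W" using C_W c by simp
  have ge: "sd z (piC z) + cd N (idx (piC z)) (idx c) \<le> sd z c"
    using lower[OF sd_path[OF z cW] c] .
  have "(z, piC z) \<in> R ^^ sd z (piC z)" using sd_path[OF z pi_W] .
  moreover have "(piC z, c) \<in> R ^^ sd (piC z) c" using sd_path[OF pi_W cW] .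
  ultimately have "(z, c) \<in> R ^^ (sd z (piC z) + sd (piC z) c)" unfolding relpow_add by blast
  then have "sd z c \<le> sd z (piC z) + sd (piC z) c" using sd_le by simp
  also have "\<dots> \<le> sd z (piC z) + cd N (idx (piC z)) (idx c)" using cyc_upper[OF pi_C c] by simp
  finally show ?thesis using ge by simp
qed

end


context mainl begin

abbreviation "hh \<equiv> (2::nat) ^ (i - 1)"

lemma N_h: "N = 2 * hh" using i1 by (cases i) auto

lemma take_mk: "length y = i - 1 \<Longrightarrow> take i (y @ a # w) = y @ [a]"
  using i1 by (cases i) auto

lemma idx_pi_mk: "length y = i - 1 \<Longrightarrow> (a = s \<or> a = t) \<Longrightarrow>
    idx (piC (y @ a # w)) = num s (QQ g y) + (if a = s then hh else 0)"
proof -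
  assume y: "length y = i - 1" and a: "a = s \<or> a = t"
  have "length y + 1 = i" using y i1 by simp
  then have "piC (y @ a # w) = QQ g y @ a # w" unfolding piC_def using QQ_PP[OF a, of y] by simp
  moreover have "take i (QQ g y @ a # w) = QQ g y @ [a]"
  proof -
    have "length (QQ g y) = i - 1" using QQ_len[of g y] y by simp
    then show ?thesis by (rule take_mk)
  qed
  ultimately show ?thesis unfolding idx_def using num_app[of s "QQ g y" a] QQ_len[of g y] y by simp
qed

lemma idx_rep: "b = s \<or> b = t \<Longrightarrow> idx (replicate i b @ w) = 0 \<or> idx (replicate i b @ w) = N - 1"
proof -
  assume b: "b = s \<or> b = t"
  have e: "idx (replicate i b @ w) = num s (replicate i b)" using idx_app by simp
  show ?thesis
  proof (cases "b = s")
    case True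
    have "num s (replicate i s) = N - 1" using num_rep_s[of s i] by arith
    then show ?thesis using e True by simp
  next
    case False then show ?thesis using e num_rep_t[of b s i] by simp
  qed
qed

lemma cardY: "finite V \<Longrightarrow> card (words V m) = card V ^ m"
proof -
  have "words V m = {xs. set xs \<subseteq> V \<and> length xs = m}" unfolding words_def by auto
  moreover assume "finite V"
  ultimately show ?thesis using card_lists_length_eq[of V m] by simp
qed

lemma count:
  assumes fin: "finite V" and G0: "\<not> G 0" "\<not> G (N - 1)" and anti: "\<And>a. a < hh \<Longrightarrow> G a \<longleftrightarrow> \<not> G (a + hh)"
  shows "card {z \<in> W. G (idx (piC z))} = card V ^ (i - 1)"
proof -
  define ch where "ch y = (if G (num s (QQ g y) + hh) then s else t)" for y
  define mk where "mk y = y @ ch y # w" for y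
  let ?Y = "words V (i - 1)"
  have numQ: "num s (QQ g y) < hh" if "length y = i - 1" for y
    using num_bound[of s "QQ g y"] QQ_len[of g y] that by simp
  have chst: "ch y = s \<or> ch y = t" for y unfolding ch_def by simp
  have mkG: "G (idx (piC (mk y)))" if ly: "length y = i - 1" for y
  proof (cases "G (num s (QQ g y) + hh)")
    case True
    then have "ch y = s" unfolding ch_def by simp
    then show ?thesis using idx_pi_mk[OF ly chst[of y]] True unfolding mk_def by simp
  next
    case False
    then have c: "ch y = t" unfolding ch_def by simp
    have "G (num s (QQ g y))" using anti[OF numQ[OF ly]] False by simp
    then show ?thesis using idx_pi_mk[OF ly chst[of y]] c st unfolding mk_def by simp
  qed
  have eq: "{z \<in> W. G (idx (piC z))} = mk ` ?Y"
  proof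
    show "mk ` ?Y \<subseteq> {z \<in> W. G (idx (piC z))}"
    proof
      fix z assume "z \<in> mk ` ?Y"
      then obtain y where y: "y \<in> ?Y" "z = mk y" by blast
      have ly: "length y = i - 1" and sy: "set y \<subseteq> V" using y(1) unfolding words_def by auto
      have "length z = n" using ly y(2) lw iln i1 unfolding mk_def by simp
      moreover have "set z \<subseteq> V" using sy wV chst[of y] sV tV y(2) unfolding mk_def by auto
      ultimately show "z \<in> {z \<in> W. G (idx (piC z))}" using mkG[OF ly] y(2) unfolding words_def by simp
    qed
  next
    show "{z \<in> W. G (idx (piC z))} \<subseteq> mk ` ?Y"
    proof
      fix z assume z: "z \<in> {z \<in> W. G (idx (piC z))}"
      then have zl: "length z = n" and zs: "set z \<subseteq> V" and Gz: "G (idx (piC z))"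
        unfolding words_def by auto
      have lz: "length z = i + length w" using zl lw iln by simp
      have "\<exists>a. (a = s \<or> a = t) \<and> drop (i - 1) z = a # w"
      proof (rule ccontr)
        assume nex: "\<not> (\<exists>a. (a = s \<or> a = t) \<and> drop (i - 1) z = a # w)"
        obtain b where b: "b = s \<or> b = t" "PP g s w i z = replicate i b @ w"
          using const[OF i1 lz nex] by blast
        have "idx (piC z) = 0 \<or> idx (piC z) = N - 1" using idx_rep[OF b(1)] b(2) unfolding piC_def by simp
        then show False using Gz G0 by auto
      qed
      then obtain a where a: "a = s \<or> a = t" "drop (i - 1) z = a # w" by blast
      define y where "y = take (i - 1) z"
      have zy: "z = y @ a # w" using a(2) append_take_drop_id[of "i - 1" z] unfolding y_def by simp
      have ly: "length y = i - 1" using zl iln unfolding y_def by simp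
      have yY: "y \<in> ?Y" using ly zs unfolding y_def words_def by (auto dest: in_set_takeD)
      have Gy: "G (num s (QQ g y) + (if a = s then hh else 0))" using Gz idx_pi_mk[OF ly a(1)] zy by simp
      have "a = ch y"
      proof (cases "a = s")
        case True then show ?thesis using Gy unfolding ch_def by simp
      next
        case False
        then have "a = t" using a(1) by simp
        have "G (num s (QQ g y))" using Gy False by simp
        then have "\<not> G (num s (QQ g y) + hh)" using anti[OF numQ[OF ly]] by simp
        then show ?thesis using \<open>a = t\<close> unfolding ch_def by simp
      qed
      then have "z = mk y" using zy unfolding mk_def by simp
      then show "z \<in> mk ` ?Y" using yY by blast
    qed
  qed
  have inj: "inj_on mk ?Y"
  proof (rule inj_onI)
    fix y y' assume y: "y \<in> ?Y" "y' \<in> ?Y" "mk y = mk y'"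
    then have "length y = i - 1" "length y' = i - 1" unfolding words_def by auto
    then show "y = y'" using y(3) unfolding mk_def
      by (metis append_eq_append_conv)
  qed
  show ?thesis using eq card_image[OF inj] cardY[OF fin] by simp
qed

lemma compl: "finite A \<Longrightarrow> card {z \<in> A. P z} + card {z \<in> A. \<not> P z} = card A"
proof -
  assume f: "finite A"
  have "{z \<in> A. \<not> P z} = A - {z \<in> A. P z}" by auto
  moreover have "card (A - {z \<in> A. P z}) = card A - card {z \<in> A. P z}"
    using f by (intro card_Diff_subset) auto
  moreover have "card {z \<in> A. P z} \<le> card A" using f by (intro card_mono) auto
  ultimately show ?thesis by simp
qed

lemma final:
  assumes fin: "finite V" and i2: "2 \<le> i" and u: "inC i u" and v: "v = act (s,t) u"
    and ex1: "{u,v} \<noteq> {replicate i s @ w, replicate i t @ w}"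
    and ex2: "{u,v} \<noteq> {replicate (i-1) s @ [t] @ w, replicate (i-1) t @ [s] @ w}"
  shows "ncloser V E n u v * ncloser V E n v u = card V ^ (i-1) * (card V ^ n - card V ^ (i-1))"
proof -
  define bu where "bu = idx u"
  have vC: "inC i v" and iv: "idx v = sc N bu" using step_C[OF u] v unfolding bu_def by auto
  have bN: "bu < N" using idx_lt[OF u] unfolding bu_def .
  have hN: "N = 2 * hh" by (rule N_h)
  have h1: "1 \<le> hh" by simp
  have repC: "inC i (replicate i b @ w)" if "b = s \<or> b = t" for b
    unfolding inC_def using that by (intro exI[of _ "replicate i b"]) auto
  have repC2: "inC i (replicate (i-1) b @ [b'] @ w)" if "b = s \<or> b = t" "b' = s \<or> b' = t" for b b'
    unfolding inC_def using that i1 by (intro exI[of _ "replicate (i-1) b @ [b']"]) auto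
  have n1: "bu \<noteq> N - 1"
  proof
    assume bu: "bu = N - 1"
    have "idx (replicate i s @ w) = N - 1" using idx_app num_rep_s[of s i] by simp
    then have uu: "u = replicate i s @ w" using idx_inj[OF u repC] bu unfolding bu_def by simp
    have "idx v = 0" using iv bu hN unfolding sc_def by simp
    moreover have "idx (replicate i t @ w) = 0" using idx_app num_rep_t[of t s i] st by simp
    ultimately have "v = replicate i t @ w" using idx_inj[OF vC repC] by simp
    then show False using uu ex1 by simp
  qed
  have n2: "bu \<noteq> hh - 1"
  proof
    assume bu: "bu = hh - 1"
    have "idx (replicate (i-1) s @ [t] @ w) = num s (replicate (i-1) s @ [t])"
      using idx_app[of "replicate (i-1) s @ [t]"] i1 by simp
    also have "\<dots> = hh - 1" using num_app[of s "replicate (i-1) s" t] num_rep_s[of s "i-1"] st by simp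
    finally have "u = replicate (i-1) s @ [t] @ w" using idx_inj[OF u repC2] bu unfolding bu_def by simp
    moreover have "idx v = hh" using iv bu hN h1 unfolding sc_def by simp
    moreover have "idx (replicate (i-1) t @ [s] @ w) = hh"
    proof -
      have "idx (replicate (i-1) t @ [s] @ w) = num s (replicate (i-1) t @ [s])"
        using idx_app[of "replicate (i-1) t @ [s]"] i1 by simp
      also have "\<dots> = hh" using num_app[of s "replicate (i-1) t" s] num_rep_t[of t s "i-1"] st by simp
      finally show ?thesis .
    qed
    ultimately have "v = replicate (i-1) t @ [s] @ w"
      using idx_inj[OF vC repC2, of t s] by simp
    then show False using \<open>u = _\<close> ex2 by simp
  qed
  define good where "good a = (dd N a bu = 0 \<or> hh < dd N a bu)" for a
  have ltu: "sd z u < sd z v \<longleftrightarrow> good (idx (piC z))" if z: "z \<in> W" for z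
  proof -
    have a: "idx (piC z) < N" using idx_lt[OF pi_C] .
    show ?thesis using exact[OF z u] exact[OF z vC] iv good_dd[OF hN a bN] unfolding bu_def good_def by simp
  qed
  have ltv: "sd z v < sd z u \<longleftrightarrow> \<not> good (idx (piC z))" if z: "z \<in> W" for z
  proof -
    have a: "idx (piC z) < N" using idx_lt[OF pi_C] .
    show ?thesis using exact[OF z u] exact[OF z vC] iv bad_dd[OF hN a bN] unfolding bu_def good_def by simp
  qed
  have nuv: "ncloser V E n u v = card {z \<in> W. good (idx (piC z))}"
    unfolding ncloser_def using ltu by (intro arg_cong[where f=card]) auto
  have nvu: "ncloser V E n v u = card {z \<in> W. \<not> good (idx (piC z))}"
    unfolding ncloser_def using ltv by (intro arg_cong[where f=card]) auto
  have ends: "good 0 \<longleftrightarrow> good (N - 1)" using good_ends[OF hN h1 bN n2 n1] unfolding good_def .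
  have anti: "good a \<longleftrightarrow> \<not> good (a + hh)" if "a < hh" for a
    using good_anti[OF hN that bN] unfolding good_def .
  have finW: "finite W"
  proof -
    have "W = {xs. set xs \<subseteq> V \<and> length xs = n}" unfolding words_def by auto
    then show ?thesis using finite_lists_length_eq[OF fin] by simp
  qed
  have tot: "card {z \<in> W. good (idx (piC z))} + card {z \<in> W. \<not> good (idx (piC z))} = card V ^ n"
    using compl[OF finW] cardY[OF fin] by simp
  show ?thesis
  proof (cases "good 0")
    case True
    have "card {z \<in> W. \<not> good (idx (piC z))} = card V ^ (i - 1)"
      using count[OF fin, of "\<lambda>a. \<not> good a"] True ends anti by auto
    moreover have "card {z \<in> W. good (idx (piC z))} = card V ^ n - card V ^ (i - 1)"
      using tot calculation by arith
    ultimately show ?thesis using nuv nvu by (simp add: mult.commute)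
  next
    case False
    have "card {z \<in> W. good (idx (piC z))} = card V ^ (i - 1)"
      using count[OF fin, of good] False ends anti by auto
    moreover have "card {z \<in> W. \<not> good (idx (piC z))} = card V ^ n - card V ^ (i - 1)"
      using tot calculation by arith
    ultimately show ?thesis using nuv nvu by simp
  qed
qed

end

theorem lemma5p4:
  fixes V :: "'a set" and E :: "('a \<times> 'a) set" and k n i :: nat
    and s t :: 'a and x w u v :: "'a list"
  assumes "oriented_tree V E" and "card V = k" and "n \<ge> 1"
    and "(s,t) \<in> E"
    and "2 \<le> i" and "i \<le> n"
    and "length x = i" and "set x \<subseteq> {s,t}"
    and "length w = n - i" and "set w \<subseteq> V" and "w \<noteq> [] \<Longrightarrow> hd w \<notin> {s,t}"
    and "u = x @ w" and "v = act (s,t) u"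
    and "{u,v} \<noteq> {replicate i s @ w, replicate i t @ w}"
    and "{u,v} \<noteq> {replicate (i-1) s @ [t] @ w, replicate (i-1) t @ [s] @ w}"
  shows "ncloser V E n u v * ncloser V E n v u = k^(i-1) * (k^n - k^(i-1))"
proof -
  note T = assms(1)
  have fin: "finite V" and EV: "E \<subseteq> V \<times> V" and noloop0: "\<forall>(p,q)\<in>E. p \<noteq> q \<and> (q,p) \<notin> E"
    and Tc: "\<forall>x\<in>V. \<forall>y\<in>V. (x,y) \<in> (und_edges E)\<^sup>*"
    using T unfolding oriented_tree_def by auto
  have noloop: "\<forall>(p,q)\<in>E. p \<noteq> q" using noloop0 by auto
  have st: "s \<noteq> t" using noloop assms(4) by auto
  have sV: "s \<in> V" and tV: "t \<in> V" using EV assms(4) by auto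
  have sp: "sig E s t s = s" "sig E s t t = t" "\<And>a. sig E s t a = s \<or> sig E s t a = t"
    "\<And>p q. (p,q) \<in> E \<Longrightarrow> (p,q) \<noteq> (s,t) \<Longrightarrow> sig E s t p = sig E s t q"
    using sig_props[OF T assms(4)] by auto
  interpret M: mainl E "sig E s t" s t w V n i
  proof (unfold_locales)
    show "s \<noteq> t" by (rule st)
    show "sig E s t s = s" by (rule sp(1))
    show "sig E s t t = t" by (rule sp(2))
    show "\<And>a. sig E s t a = s \<or> sig E s t a = t" by (rule sp(3))
    show "\<And>p q. (p,q) \<in> E \<Longrightarrow> (p,q) \<noteq> (s,t) \<Longrightarrow> sig E s t p = sig E s t q" by (rule sp(4))
    show "w \<noteq> [] \<Longrightarrow> hd w \<noteq> s \<and> hd w \<noteq> t" using assms(11) by auto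
    show "E \<subseteq> V \<times> V" by (rule EV)
    show "s \<in> V" by (rule sV)
    show "t \<in> V" by (rule tV)
    show "set w \<subseteq> V" by (rule assms(10))
    show "length w = n - i" by (rule assms(9))
    show "i \<le> n" by (rule assms(6))
    show "1 \<le> i" using assms(5) by simp
    show "\<And>x y. x \<in> words V n \<Longrightarrow> y \<in> words V n \<Longrightarrow> (x,y) \<in> (schreier_adj V E n)\<^sup>*"
      using conn_words[OF EV noloop Tc] by blast
    show "(s,t) \<in> E" by (rule assms(4))
  qed
  have uC: "M.inC i u" unfolding M.inC_def using assms(7,8,12) by blast
  show ?thesis using M.final[OF fin assms(5) uC assms(13) assms(14) assms(15)] assms(2) by simp
qed


end
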